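(* Suppose actions are chosen by contextual GP-TS-SDF: given $\mathcal{F}_{t-1}$, sample $g_t\sim\mathcal{GP}(\mu_{t-1}(\cdot,\cdot),\nu_t^2\sigma^2_{t-1}(\cdot,\cdot))$ and, for the given context $z_t$, select $x_t\in\arg\max_{x\in\mathcal{Q}}g_t(z_t,x)$. For any filtration $\mathcal{F}_{t-1}$ and given context $z_t$, conditioned on the event $E^f(t)$, $$\mathbb{P}\left(x_t\in\mathcal{Q}\setminus S_t\mid\mathcal{F}_{t-1}\right)\ge p-1/t^2,\qquad p=\frac{1}{4e\sqrt{\pi}}.$$
   Context: Setting (contextual GP bandits with delayed feedback). $\mathcal{Q}\subset\mathbb{R}^n$ finite action set, $\mathcal{Z}\subset\mathbb{R}^{n'}$ finite context set. $k$ a positive semidefinite kernel on $\mathcal{Z}\times\mathcal{Q}$ with $k\le1$; $g$ in its RKHS with $\|g\|_k\le\mathcal{B}_f$. In round $t$ the environment gives a context $z_t$, the learner selects $x_t\in\mathcal{Q}$ and gets $y_t=g(z_t,x_t)+\epsilon_t$ ($R$-sub-Gaussian $\epsilon_t$, $|y_t|\le\mathcal{B}_y$), observed after a random delay $d_t\in\{0,1,\ldots\}$ drawn from $\mathcal{D}$. For an integer $m\ge1$, $\rho_m=\mathbb{P}(d_s\le m)$, $\tilde y_{s,t}=y_s\mathbb{1}\{d_s\le\min(m,t-s)\}$. With $\lambda>0$, $w_i=(z_i,x_i)$, $w=(z,x)$: $\mu_{t-1}(w)=\mathbf{k}_{t-1}(w)^\top(\mathbf{K}_{t-1}+\lambda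 I)^{-1}\tilde{\mathbf{y}}_{t-1}$, $\sigma^2_{t-1}(w,w')=k(w,w')-\mathbf{k}_{t-1}(w)^\top(\mathbf{K}_{t-1}+\lambda I)^{-1}\mathbf{k}_{t-1}(w')$, $\sigma^2_{t-1}(w)=\sigma^2_{t-1}(w,w)$, $\mathbf{k}_{t-1}(w)=(k(w,w_i))_{i\le t-1}$, $\mathbf{K}_{t-1}=(k(w_i,w_j))_{i,j\le t-1}$, $\tilde{\mathbf{y}}_{t-1}=(\tilde y_{s,t})_{s\le t-1}$. $\gamma_t=\max_A\frac12\log\det(I+\lambda^{-1}\mathbf{K}_A)$ over collections of $t$ points of $\mathcal{Z}\times\mathcal{Q}$. For $\delta\in(0,1)$: $\beta_t=\mathcal{B}_f+(R+\mathcal{B}_y)\sqrt{2(\gamma_{t-1}+1+\log(4/\delta))}$, $\nu_t=\mathcal{B}_y\sum_{s=t-m}^{t-1}\sigma_{t-1}(z_s,x_s)+\beta_t$ (terms with $s<1$ omitted), $c_t=\nu_t(1+\sqrt{2\log(|\mathcal{Z}||\mathcal{Q}|t^2)})$. $\mathcal{F}_{t-1}$: history up to round $t-1$. $E^f(t)$: the event that $|\mu_{t-1}(z,x)-\rho_mg(z,x)|\le\nu_t\sigma_{t-1}(z,x)$ for all $z,x$. With $x_t^\star\in\arg\max_{x\in\mathcal{Q}}g(z_t,x)$ and $\Delta(z_t,x)=g(z_t,x_t^\star)-g(z_t,x)$, the saturated set is $S_t=\{x\in\mathcal{Q}:\rho_m\Delta(z_t,x)>c_t\sigma_{t-1}(z_t,x)\}$.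 *)

theory Defs
  imports "HOL-Probability.Probability"
    "Jordan_Normal_Form.Gauss_Jordan_Elimination" "Jordan_Normal_Form.Determinant"
begin

definition psd_kernel :: "('w \<Rightarrow> 'w \<Rightarrow> real) \<Rightarrow> 'w set \<Rightarrow> bool" where
  "psd_kernel k W \<longleftrightarrow>
     (\<forall>w\<in>W. \<forall>w'\<in>W. k w w' = k w' w) \<and>
     (\<forall>ws (c :: nat \<Rightarrow> real). set ws \<subseteq> W \<longrightarrow>
        0 \<le> (\<Sum>i<length ws. \<Sum>j<length ws. c i * c j * k (ws ! i) (ws ! j)))"

text \<open>On a finite domain the RKHS consists of the functions w \<mapsto> sum_u alpha u k(w,u), with
  squared norm alpha^T K alpha (independent of the representation).\<close>
definition rkhs_norm_le :: "('w \<Rightarrow> 'w \<Rightarrow> real) \<Rightarrow> 'w set \<Rightarrow> ('w \<Rightarrow> real) \<Rightarrow> real \<Rightarrow> bool" where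
  "rkhs_norm_le k W f B \<longleftrightarrow>
     (\<exists>\<alpha>::'w \<Rightarrow> real. (\<forall>w\<in>W. f w = (\<Sum>u\<in>W. \<alpha> u * k w u)) \<and>
        sqrt (\<Sum>u\<in>W. \<Sum>v\<in>W. \<alpha> u * \<alpha> v * k u v) \<le> B)"

definition gram :: "('w \<Rightarrow> 'w \<Rightarrow> real) \<Rightarrow> 'w list \<Rightarrow> real mat" where
  "gram k ws = mat (length ws) (length ws) (\<lambda>(i, j). k (ws ! i) (ws ! j))"

definition kvec :: "('w \<Rightarrow> 'w \<Rightarrow> real) \<Rightarrow> 'w list \<Rightarrow> 'w \<Rightarrow> real vec" where
  "kvec k ws w = vec (length ws) (\<lambda>i. k w (ws ! i))"

definition reg_inv :: "('w \<Rightarrow> 'w \<Rightarrow> real) \<Rightarrow> real \<Rightarrow> 'w list \<Rightarrow> real mat" where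
  "reg_inv k lam ws = the (mat_inverse (gram k ws + lam \<cdot>\<^sub>m 1\<^sub>m (length ws)))"

definition post_mean :: "('w \<Rightarrow> 'w \<Rightarrow> real) \<Rightarrow> real \<Rightarrow> 'w list \<Rightarrow> real vec \<Rightarrow> 'w \<Rightarrow> real" where
  "post_mean k lam ws ys w = kvec k ws w \<bullet> (reg_inv k lam ws *\<^sub>v ys)"

definition post_cov :: "('w \<Rightarrow> 'w \<Rightarrow> real) \<Rightarrow> real \<Rightarrow> 'w list \<Rightarrow> 'w \<Rightarrow> 'w \<Rightarrow> real" where
  "post_cov k lam ws w w' = k w w' - kvec k ws w \<bullet> (reg_inv k lam ws *\<^sub>v kvec k ws w')"

definition post_sd :: "('w \<Rightarrow> 'w \<Rightarrow> real) \<Rightarrow> real \<Rightarrow> 'w list \<Rightarrow> 'w \<Rightarrow> real" where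
  "post_sd k lam ws w = sqrt (post_cov k lam ws w w)"

definition max_info_gain :: "('w \<Rightarrow> 'w \<Rightarrow> real) \<Rightarrow> real \<Rightarrow> 'w set \<Rightarrow> nat \<Rightarrow> real" where
  "max_info_gain k lam W t =
     Max {(1/2) * ln (det (1\<^sub>m t + (1 / lam) \<cdot>\<^sub>m gram k A)) | A. set A \<subseteq> W \<and> length A = t}"

definition std_gauss_vec :: "'w set \<Rightarrow> ('w \<Rightarrow> real) measure" where
  "std_gauss_vec W = PiM W (\<lambda>_. density lborel std_normal_density)"


definition ytil :: "(nat \<Rightarrow> real) \<Rightarrow> (nat \<Rightarrow> nat) \<Rightarrow> nat \<Rightarrow> nat \<Rightarrow> nat \<Rightarrow> real" where
  "ytil y d m t s = (if d s \<le> min m (t - s) then y s else 0)"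

text \<open>Vector (ytil_{s,t})_{s = 1..t-1}; entry i corresponds to round s = i + 1.\<close>
definition ytil_vec :: "(nat \<Rightarrow> real) \<Rightarrow> (nat \<Rightarrow> nat) \<Rightarrow> nat \<Rightarrow> nat \<Rightarrow> real vec" where
  "ytil_vec y d m t = vec (t - 1) (\<lambda>i. ytil y d m t (i + 1))"

definition beta_t :: "real \<Rightarrow> real \<Rightarrow> real \<Rightarrow> real \<Rightarrow> real \<Rightarrow> real" where
  "beta_t Bf R By gam \<delta> = Bf + (R + By) * sqrt (2 * (gam + 1 + ln (4 / \<delta>)))"

text \<open>nu_t = By * sum_{s=t-m}^{t-1} sigma_{t-1}(w_s) + beta_t (terms s < 1 omitted);
  the history ws lists w_1, ..., w_{t-1}, so w_s = ws ! (s - 1).\<close>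
definition nu_t :: "real \<Rightarrow> ('w \<Rightarrow> real) \<Rightarrow> 'w list \<Rightarrow> nat \<Rightarrow> nat \<Rightarrow> real \<Rightarrow> real" where
  "nu_t By sd ws m t beta = By * (\<Sum>s\<in>{max 1 (t - m)..t - 1}. sd (ws ! (s - 1))) + beta"

definition c_t :: "real \<Rightarrow> nat \<Rightarrow> nat \<Rightarrow> nat \<Rightarrow> real" where
  "c_t nu nZ nQ t = nu * (1 + sqrt (2 * ln (real nZ * real nQ * (real t)\<^sup>2)))"

definition saturated :: "'q set \<Rightarrow> ('z \<times> 'q \<Rightarrow> real) \<Rightarrow> real \<Rightarrow> real \<Rightarrow> ('z \<times> 'q \<Rightarrow> real) \<Rightarrow> 'z \<Rightarrow> 'q set" where
  "saturated Q g \<rho> c sd zt =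
     {x \<in> Q. \<rho> * (Max ((\<lambda>x'. g (zt, x')) ` Q) - g (zt, x)) > c * sd (zt, x)}"

end

theory Submission
  imports Defs "HOL-Analysis.Analysis"
begin

abbreviation "GV W \<equiv> PiM W (\<lambda>_. density lborel std_normal_density)"

lemma GV_prob: "prob_space (GV W)"
  by (rule prob_space_PiM) (simp add: prob_space_normal_density)

lemma GV_coord_distr:
  assumes "i \<in> W"
  shows "distributed (GV W) lborel (\<lambda>\<xi>. \<xi> i) std_normal_density"
proof -
  have "distr (GV W) lborel (\<lambda>\<xi>. \<xi> i) = distr (GV W) (density lborel std_normal_density) (\<lambda>\<xi>. \<xi> i)"
    by (rule distr_cong) auto
  also have "\<dots> = density lborel std_normal_density"
    by (rule distr_PiM_component[OF _ assms]) (simp add: prob_space_normal_density)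
  finally show ?thesis unfolding distributed_def using assms
    by (auto simp: measurable_PiM_component_rev)
qed

lemma GV_indep:
  assumes "W \<noteq> {}"
  shows "prob_space.indep_vars (GV W) (\<lambda>_. borel) (\<lambda>u \<xi>. \<xi> u) W"
proof -
  interpret P: prob_space "GV W" by (rule GV_prob)
  have rv: "(\<lambda>\<xi>. \<xi> i) \<in> measurable (GV W) borel" if "i \<in> W" for i
    using distributed_measurable[OF GV_coord_distr[OF that]] by simp
  show ?thesis
  proof (subst P.indep_vars_iff_distr_eq_PiM'[OF assms rv], assumption)
    have s: "sets (PiM W (\<lambda>_. borel)) = sets (GV W)"
      by (rule sets_PiM_cong) simp_all
    have r: "(\<lambda>i\<in>W. x i) = x" if "x \<in> space (GV W)" for x
      using that by (simp add: space_PiM PiE_def extensional_restrict)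
    have "distr (GV W) (PiM W (\<lambda>_. borel)) (\<lambda>x. \<lambda>i\<in>W. x i) = distr (GV W) (GV W) (\<lambda>x. x)"
      by (rule distr_cong[OF refl s r])
    also have "\<dots> = GV W" by (rule distr_id)
    also have "\<dots> = PiM W (\<lambda>i. distr (GV W) borel (\<lambda>\<xi>. \<xi> i))"
    proof (rule PiM_cong[OF refl])
      fix i assume i: "i \<in> W"
      have "distr (GV W) borel (\<lambda>\<xi>. \<xi> i) = distr (GV W) lborel (\<lambda>\<xi>. \<xi> i)"
        by (rule distr_cong) simp_all
      also have "\<dots> = density lborel std_normal_density"
        by (rule distributed_distr_eq_density[OF GV_coord_distr[OF i]])
      finally show "density lborel std_normal_density = distr (GV W) borel (\<lambda>\<xi>. \<xi> i)" by simp
    qed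
    finally show "distr (GV W) (PiM W (\<lambda>_. borel)) (\<lambda>x. \<lambda>i\<in>W. x i) = PiM W (\<lambda>i. distr (GV W) borel (\<lambda>\<xi>. \<xi> i))" .
  qed
qed

lemma GV_lin_distr:
  assumes W: "finite W" and pos: "(\<Sum>u\<in>W. (c u)^2) > 0"
  shows "distributed (GV W) lborel (\<lambda>\<xi>. \<Sum>u\<in>W. c u * \<xi> u) (normal_density 0 (sqrt (\<Sum>u\<in>W. (c u)^2)))"
proof -
  interpret P: prob_space "GV W" by (rule GV_prob)
  define I where "I = {u\<in>W. c u \<noteq> 0}"
  have IW: "I \<subseteq> W" "finite I" using W by (auto simp: I_def)
  have sW: "(\<Sum>u\<in>W. (c u)^2) = (\<Sum>u\<in>I. (c u)^2)"
    by (rule sum.mono_neutral_right) (use W in \<open>auto simp: I_def\<close>)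
  have I0: "I \<noteq> {}" using pos sW by auto
  have W0: "W \<noteq> {}" using IW I0 by auto
  have ind: "P.indep_vars (\<lambda>_. borel) (\<lambda>u \<xi>. c u * \<xi> u) I"
    by (rule P.indep_vars_compose2[OF P.indep_vars_subset[OF GV_indep[OF W0] IW(1)]]) auto
  have d: "distributed (GV W) lborel (\<lambda>\<xi>. c u * \<xi> u) (normal_density 0 \<bar>c u\<bar>)" if "u \<in> I" for u
  proof -
    have uW: "u \<in> W" "c u \<noteq> 0" using that by (auto simp: I_def)
    have "distributed (GV W) lborel (\<lambda>\<xi>. 0 + c u * \<xi> u) (normal_density (0 + c u * 0) (\<bar>c u\<bar> * 1))"
      by (rule P.normal_density_affine[OF GV_coord_distr[OF uW(1)]]) (simp_all add: uW)
    then show ?thesis by simp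
  qed
  have "distributed (GV W) lborel (\<lambda>\<xi>. \<Sum>u\<in>I. c u * \<xi> u) (normal_density (\<Sum>u\<in>I. 0) (sqrt (\<Sum>u\<in>I. (\<bar>c u\<bar>)\<^sup>2)))"
    by (rule P.sum_indep_normal[OF IW(2) I0 ind]) (simp_all add: d I_def)
  moreover have "(\<lambda>\<xi>. \<Sum>u\<in>I. c u * \<xi> u) = (\<lambda>\<xi>. \<Sum>u\<in>W. c u * \<xi> u)"
    by (rule ext, rule sum.mono_neutral_left) (use W in \<open>auto simp: I_def\<close>)
  moreover have "(\<Sum>u\<in>I. (0::real)) = 0" by simp
  moreover have "(\<Sum>u\<in>I. (\<bar>c u\<bar>)\<^sup>2) = (\<Sum>u\<in>W. (c u)^2)" using sW by simp
  ultimately show ?thesis by (simp only:)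
qed

lemma std_lower: "emeasure (density lborel std_normal_density) {1..} \<ge> ennreal (std_normal_density 2)"
proof -
  have "ennreal (std_normal_density 2) = (\<integral>\<^sup>+x. ennreal (std_normal_density 2) * indicator {1..2::real} x \<partial>lborel)"
    by (subst nn_integral_cmult_indicator) auto
  also have "\<dots> \<le> (\<integral>\<^sup>+x. ennreal (std_normal_density x) * indicator {1..} x \<partial>lborel)"
  proof (intro nn_integral_mono)
    fix x :: real
    show "ennreal (std_normal_density 2) * indicator {1..2} x \<le> ennreal (std_normal_density x) * indicator {1..} x"
    proof (cases "x \<in> {1..2}")
      case True
      then have "x^2 \<le> 2^2" by (intro power_mono) auto
      then have "std_normal_density 2 \<le> std_normal_density x"
        unfolding std_normal_density_def by (intro mult_left_mono) auto
      then show ?thesis using True by (auto simp: indicator_def)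
    qed (auto simp: indicator_def)
  qed
  also have "\<dots> = emeasure (density lborel std_normal_density) {1..}"
    by (simp add: emeasure_density)
  finally show ?thesis .
qed

lemma std_lower_const: "1 / (4 * exp 1 * sqrt pi) \<le> std_normal_density 2"
proof -
  have e: "exp (1::real) \<le> 2.72" using e_less_272 by simp
  have s2: "sqrt 2 \<ge> (1.41::real)" by (rule real_le_rsqrt) (simp add: power2_eq_square)
  have "exp 1 * sqrt 2 \<le> (4::real)"
  proof -
    have "exp 1 * sqrt 2 \<le> 2.72 * sqrt 2" using e by (intro mult_right_mono) auto
    also have "\<dots> \<le> 2.72 * 1.4143"
    proof -
      have "sqrt 2 \<le> sqrt (1.4143^2)" by (simp only: real_sqrt_le_iff) (simp add: power2_eq_square)
      then have "sqrt 2 \<le> (1.4143::real)" by simp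
      then show ?thesis by simp
    qed
    finally show ?thesis by simp
  qed
  have ep: "exp 1 * exp 1 * exp (-2) = (1::real)" by (simp add: mult_exp_exp)
  have "std_normal_density 2 = exp (-2) / sqrt (2 * pi)" by (simp add: std_normal_density_def)
  also have "sqrt (2*pi) = sqrt 2 * sqrt pi" by (simp add: real_sqrt_mult)
  finally have sd: "std_normal_density 2 = exp (-2) / (sqrt 2 * sqrt pi)" .
  have pos: "sqrt 2 * sqrt pi > 0" "exp 1 * sqrt pi > 0" by auto
  have "1 / (4 * exp 1 * sqrt pi) \<le> 1 / (exp 1 * sqrt 2 * exp 1 * sqrt pi)"
    using \<open>exp 1 * sqrt 2 \<le> 4\<close> by (intro divide_left_mono mult_right_mono mult_pos_pos) auto
  also have "\<dots> = exp (-2) / (sqrt 2 * sqrt pi)"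
    using ep pos by (simp add: field_simps)
  finally show ?thesis using sd by simp
qed

lemma std_upper:
  assumes a: "a \<ge> 1"
  shows "emeasure (density lborel std_normal_density) {a<..} \<le> ennreal (exp (- a\<^sup>2 / 2))"
proof -
  have "emeasure (density lborel std_normal_density) {a<..} = (\<integral>\<^sup>+x. ennreal (std_normal_density x) * indicator {a<..} x \<partial>lborel)"
    by (simp add: emeasure_density)
  also have "\<dots> \<le> (\<integral>\<^sup>+x. ennreal (x * std_normal_density x) * indicator {a..} x \<partial>lborel)"
  proof (intro nn_integral_mono)
    fix x :: real
    show "ennreal (std_normal_density x) * indicator {a<..} x \<le> ennreal (x * std_normal_density x) * indicator {a..} x"
    proof (cases "a < x")
      case True
      then have "std_normal_density x \<le> x * std_normal_density x"
        using a by (intro mult_right_mono[of 1 x, simplified]) auto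
      then show ?thesis using True by (auto simp: indicator_def intro: ennreal_leI)
    qed (auto simp: indicator_def)
  qed
  also have "\<dots> = ennreal (0 - (- std_normal_density a))"
  proof (rule nn_integral_FTC_atLeast)
    show "(\<lambda>x. x * std_normal_density x) \<in> borel_measurable borel" by measurable
    show "\<And>x. a \<le> x \<Longrightarrow> DERIV (\<lambda>x. - std_normal_density x) x :> x * std_normal_density x"
      unfolding std_normal_density_def
      by (auto intro!: derivative_eq_intros simp: field_simps power2_eq_square)
    show "\<And>x. a \<le> x \<Longrightarrow> 0 \<le> x * std_normal_density x" using a by auto
    have lim: "filterlim (\<lambda>x::real. (1/2) * x\<^sup>2) at_top at_top"
      by (intro filterlim_tendsto_pos_mult_at_top[OF tendsto_const] filterlim_pow_at_top filterlim_ident) auto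
    have e: "(\<lambda>x::real. - x\<^sup>2 / 2) = (\<lambda>x. - ((1/2) * x\<^sup>2))" by (auto simp: field_simps)
    have "filterlim (\<lambda>x::real. - x\<^sup>2 / 2) at_bot at_top"
      unfolding e using filterlim_compose[OF filterlim_uminus_at_bot_at_top lim] by (simp add: o_def)
    then have "((\<lambda>x::real. exp (- x\<^sup>2 / 2)) \<longlongrightarrow> 0) at_top"
      by (rule filterlim_compose[OF exp_at_bot])
    then have "((\<lambda>x::real. - ((1 / sqrt (2 * pi)) * exp (- x\<^sup>2 / 2))) \<longlongrightarrow> - ((1 / sqrt (2 * pi)) * 0)) at_top"
      by (intro tendsto_minus tendsto_mult tendsto_const)
    then show "((\<lambda>x. - std_normal_density x) \<longlongrightarrow> 0) at_top"
      unfolding std_normal_density_def by simp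
  qed
  also have "\<dots> \<le> ennreal (exp (- a\<^sup>2 / 2))"
  proof (intro ennreal_leI)
    have "sqrt (2*pi) \<ge> 1" using pi_gt3 by (simp add: real_le_rsqrt)
    then show "0 - - std_normal_density a \<le> exp (- a\<^sup>2 / 2)"
      unfolding std_normal_density_def by (simp add: field_simps)
  qed
  finally show ?thesis .
qed

lemma std_event:
  assumes W: "finite W" and pos: "(\<Sum>u\<in>W. (c u)^2) > 0" and A: "A \<in> sets borel"
  shows "measure (GV W) {\<xi> \<in> space (GV W). (\<Sum>u\<in>W. c u * \<xi> u) / sqrt (\<Sum>u\<in>W. (c u)^2) \<in> A}
         = measure (density lborel std_normal_density) A"
proof -
  interpret P: prob_space "GV W" by (rule GV_prob)
  let ?s = "sqrt (\<Sum>u\<in>W. (c u)^2)"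
  have sp: "?s > 0" using pos by simp
  have "distributed (GV W) lborel (\<lambda>\<xi>. ((\<Sum>u\<in>W. c u * \<xi> u) - 0) / ?s) std_normal_density"
    by (rule P.normal_standard_normal_convert[OF sp, THEN iffD1]) (rule GV_lin_distr[OF W pos])
  then have d: "distributed (GV W) lborel (\<lambda>\<xi>. (\<Sum>u\<in>W. c u * \<xi> u) / ?s) std_normal_density" by simp
  have "measure (density lborel std_normal_density) A = measure (distr (GV W) lborel (\<lambda>\<xi>. (\<Sum>u\<in>W. c u * \<xi> u) / ?s)) A"
    using distributed_distr_eq_density[OF d] by simp
  also have "\<dots> = measure (GV W) ((\<lambda>\<xi>. (\<Sum>u\<in>W. c u * \<xi> u) / ?s) -` A \<inter> space (GV W))"
    by (rule measure_distr[OF distributed_measurable[OF d]]) (use A in simp)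
  finally show ?thesis by (simp add: vimage_def Int_def conj_commute)
qed

lemma std_meas_lower: "1 / (4 * exp 1 * sqrt pi) \<le> measure (density lborel std_normal_density) {1..}"
proof -
  interpret N: prob_space "density lborel std_normal_density" by (simp add: prob_space_normal_density)
  have "ennreal (std_normal_density 2) \<le> ennreal (measure (density lborel std_normal_density) {1..})"
    using std_lower by (simp add: N.emeasure_eq_measure)
  then have "std_normal_density 2 \<le> measure (density lborel std_normal_density) {1..}"
    by (simp add: ennreal_le_iff)
  then show ?thesis using std_lower_const by linarith
qed

lemma std_meas_upper: "a \<ge> 1 \<Longrightarrow> measure (density lborel std_normal_density) {a<..} \<le> exp (- a\<^sup>2 / 2)"
proof -
  assume a: "a \<ge> 1"
  interpret N: prob_space "density lborel std_normal_density" by (simp add: prob_space_normal_density)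
  have "ennreal (measure (density lborel std_normal_density) {a<..}) \<le> ennreal (exp (- a\<^sup>2 / 2))"
    using std_upper[OF a] by (simp add: N.emeasure_eq_measure)
  then show ?thesis by (simp add: ennreal_le_iff)
qed

lemma GV_S_meas: "(\<lambda>\<xi>. \<Sum>u\<in>W. c u * \<xi> u) \<in> borel_measurable (GV W)"
proof (rule borel_measurable_sum)
  fix u assume "u \<in> W"
  then have "(\<lambda>\<xi>. \<xi> u) \<in> borel_measurable (GV W)"
    using distributed_measurable[OF GV_coord_distr] by simp
  then show "(\<lambda>\<xi>. c u * \<xi> u) \<in> borel_measurable (GV W)"
    by (rule borel_measurable_times[OF borel_measurable_const])
qed

theorem lemma10:
  fixes Z :: "(real ^ 'n2) set" and Q :: "(real ^ 'n1) set"
    and k :: "((real ^ 'n2) \<times> (real ^ 'n1)) \<Rightarrow> ((real ^ 'n2) \<times> (real ^ 'n1)) \<Rightarrow> real"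
    and g :: "((real ^ 'n2) \<times> (real ^ 'n1)) \<Rightarrow> real"
    and Bf By R lam \<delta> :: real
    and D :: "nat pmf" and m t :: nat
    and ws :: "((real ^ 'n2) \<times> (real ^ 'n1)) list"
    and y :: "nat \<Rightarrow> real" and d :: "nat \<Rightarrow> nat"
    and zt :: "real ^ 'n2"
    and L :: "((real ^ 'n2) \<times> (real ^ 'n1)) \<Rightarrow> ((real ^ 'n2) \<times> (real ^ 'n1)) \<Rightarrow> real"
    and sel :: "(((real ^ 'n2) \<times> (real ^ 'n1)) \<Rightarrow> real) \<Rightarrow> real ^ 'n1"
  defines "\<rho> \<equiv> measure_pmf.prob D {..m}"
    and "\<mu> \<equiv> post_mean k lam ws (ytil_vec y d m t)"
    and "\<sigma> \<equiv> post_sd k lam ws"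
    and "\<nu> \<equiv> nu_t By (post_sd k lam ws) ws m t
               (beta_t Bf R By (max_info_gain k lam (Z \<times> Q) (t - 1)) \<delta>)"
  assumes Z: "finite Z" "Z \<noteq> {}" and Q: "finite Q" "Q \<noteq> {}"
    and kern: "psd_kernel k (Z \<times> Q)" "\<forall>w\<in>Z \<times> Q. \<forall>w'\<in>Z \<times> Q. k w w' \<le> 1"
    and g: "rkhs_norm_le k (Z \<times> Q) g Bf"
    and params: "lam > 0" "0 < \<delta>" "\<delta> < 1" "R \<ge> 0" "m \<ge> 1" "t \<ge> 1"
    and hist: "length ws = t - 1" "set ws \<subseteq> Z \<times> Q" "\<forall>s. \<bar>y s\<bar> \<le> By"
    and ctx: "zt \<in> Z"
    and Ef: "\<forall>z\<in>Z. \<forall>x\<in>Q. \<bar>\<mu> (z, x) - \<rho> * g (z, x)\<bar> \<le> \<nu> * \<sigma> (z, x)"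
    and cov: "\<forall>w\<in>Z \<times> Q. \<forall>w'\<in>Z \<times> Q.
                (\<Sum>u\<in>Z \<times> Q. L w u * L w' u) = \<nu>\<^sup>2 * post_cov k lam ws w w'"
    and sel: "\<forall>h. sel h \<in> Q \<and> (\<forall>x\<in>Q. h (zt, x) \<le> h (zt, sel h))"
    and sel_meas: "(\<lambda>\<xi>. sel (\<lambda>w. \<mu> w + (\<Sum>u\<in>Z \<times> Q. L w u * \<xi> u)))
                     \<in> std_gauss_vec (Z \<times> Q) \<rightarrow>\<^sub>M count_space UNIV"
  shows "measure (std_gauss_vec (Z \<times> Q))
           {\<xi> \<in> space (std_gauss_vec (Z \<times> Q)).
              sel (\<lambda>w. \<mu> w + (\<Sum>u\<in>Z \<times> Q. L w u * \<xi> u))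
                \<in> Q - saturated Q g \<rho> (c_t \<nu> (card Z) (card Q) t) \<sigma> zt}
         \<ge> 1 / (4 * exp 1 * sqrt pi) - 1 / (real t)\<^sup>2"
  proof -
  let ?W = "Z \<times> Q"
  let ?M = "GV ?W"
  interpret P: prob_space ?M by (rule GV_prob)
  let ?p = "1 / (4 * exp 1 * sqrt pi)"
  define sL where "sL w = sqrt (\<Sum>u\<in>?W. (L w u)\<^sup>2)" for w
  define S where "S w \<xi> = (\<Sum>u\<in>?W. L w u * \<xi> u)" for w and \<xi> :: "(real ^ 'n2) \<times> (real ^ 'n1) \<Rightarrow> real"
  have finW: "finite ?W" using Z Q by simp
  have p_le1: "?p \<le> 1"
  proof -
    have a1: "1 \<le> exp (1::real)" by simp
    have a2: "1 \<le> sqrt pi" using pi_gt3 by simp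
    have "1 * 1 \<le> exp (1::real) * sqrt pi" by (rule mult_mono[OF a1 a2]) auto
    then have "1 \<le> 4 * (exp 1 * sqrt pi)" by simp
    then have "1 \<le> 4 * exp 1 * sqrt pi" by (simp add: mult.assoc)
    then show ?thesis by simp
  qed
  show ?thesis
  proof (cases "t = 1")
    case True
    then have "?p - 1 / (real t)\<^sup>2 \<le> 0" using p_le1 by simp
    then show ?thesis unfolding std_gauss_vec_def by (rule order_trans[OF _ measure_nonneg])
  next
    case False
    then have t2: "t \<ge> 2" using params(6) by simp
    have F1: "\<nu> * \<sigma> w = sL w" if w: "w \<in> ?W" for w
    proof -
      obtain z x where zx: "w = (z, x)" "z \<in> Z" "x \<in> Q" using w by auto
      have cw: "(\<Sum>u\<in>?W. (L w u)\<^sup>2) = \<nu>\<^sup>2 * post_cov k lam ws w w"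
        using cov[rule_format, OF w w] by (simp add: power2_eq_square)
      have "\<bar>\<mu> (z, x) - \<rho> * g (z, x)\<bar> \<le> \<nu> * \<sigma> (z, x)" using Ef zx by blast
      then have nn: "0 \<le> \<nu> * \<sigma> w" unfolding zx(1) by (rule order_trans[OF abs_ge_zero])
      have q0: "0 \<le> (\<Sum>u\<in>?W. (L w u)\<^sup>2)" by (simp add: sum_nonneg)
      show ?thesis
      proof (cases "\<nu> = 0")
        case True
        then show ?thesis using cw by (simp add: sL_def)
      next
        case False
        then have n2: "\<nu>\<^sup>2 > 0" by simp
        have "\<nu>\<^sup>2 * 0 \<le> \<nu>\<^sup>2 * post_cov k lam ws w w" using cw q0 by simp
        then have "post_cov k lam ws w w \<ge> 0" using mult_le_cancel_left_pos[OF n2] by blast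
        then have "(\<sigma> w)\<^sup>2 = post_cov k lam ws w w" by (simp add: \<sigma>_def post_sd_def)
        then have "(\<nu> * \<sigma> w)\<^sup>2 = (\<Sum>u\<in>?W. (L w u)\<^sup>2)" using cw by (simp add: power_mult_distrib)
        then have "sqrt ((\<nu> * \<sigma> w)\<^sup>2) = sL w" by (simp add: sL_def)
        then show ?thesis using nn by simp
      qed
    qed
    have F2: "\<bar>\<mu> w - \<rho> * g w\<bar> \<le> sL w" if w: "w \<in> ?W" for w
    proof -
      obtain z x where zx: "w = (z, x)" "z \<in> Z" "x \<in> Q" using w by auto
      have "\<bar>\<mu> (z, x) - \<rho> * g (z, x)\<bar> \<le> \<nu> * \<sigma> (z, x)" using Ef zx by blast
      then show ?thesis using F1[OF w] zx by simp
    qed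
    have gfin: "finite ((\<lambda>x'. g (zt, x')) ` Q)" "(\<lambda>x'. g (zt, x')) ` Q \<noteq> {}" using Q by auto
    obtain x0 where x0: "x0 \<in> Q" "g (zt, x0) = Max ((\<lambda>x'. g (zt, x')) ` Q)"
      using Max_in[OF gfin] by force
    define Nn where "Nn = real (card Z) * real (card Q) * (real t)\<^sup>2"
    define r where "r = sqrt (2 * ln Nn)"
    have "card Z > 0" using Z by (simp add: card_gt_0_iff)
    then have cZ: "real (card Z) \<ge> 1" by simp
    have "card Q > 0" using Q by (simp add: card_gt_0_iff)
    then have cQ: "real (card Q) \<ge> 1" by simp
    have "real t \<ge> 2" using t2 by simp
    then have "(real t)\<^sup>2 \<ge> 2\<^sup>2" by (rule power_mono) simp
    then have tt: "(real t)\<^sup>2 \<ge> 4" by simp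
    have Nn4: "Nn \<ge> 4"
    proof -
      have c1: "1 * 1 \<le> real (card Z) * real (card Q)" by (rule mult_mono[OF cZ cQ]) auto
      have "1 * 4 \<le> (real (card Z) * real (card Q)) * (real t)\<^sup>2" by (rule mult_mono[OF _ tt]) (use c1 in auto)
      then show ?thesis unfolding Nn_def by simp
    qed
    have Npos: "Nn > 0" using Nn4 by simp
    have lnN: "ln Nn \<ge> 1/2"
    proof -
      have "exp (1/2::real) \<le> exp 1" by simp
      also have "\<dots> \<le> 3" by (rule exp_le)
      also have "\<dots> \<le> Nn" using Nn4 by simp
      finally have "exp (1/2) \<le> Nn" .
      then have "ln (exp (1/2)) \<le> ln Nn" using Npos by (subst ln_le_cancel_iff) auto
      then show ?thesis by simp
    qed
    have r1: "r \<ge> 1" unfolding r_def using lnN by simp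
    have r2: "r\<^sup>2 = 2 * ln Nn" unfolding r_def using lnN by simp
    have er: "exp (- r\<^sup>2 / 2) = 1 / Nn"
      using r2 Npos by (simp add: exp_minus exp_ln inverse_eq_divide)
    have ctv: "c_t \<nu> (card Z) (card Q) t = \<nu> * (1 + r)" by (simp add: c_t_def r_def Nn_def)
    have ct: "c_t \<nu> (card Z) (card Q) t * \<sigma> w = (1 + r) * sL w" if "w \<in> ?W" for w
    proof -
      have "c_t \<nu> (card Z) (card Q) t * \<sigma> w = (1 + r) * (\<nu> * \<sigma> w)" by (simp add: ctv mult_ac)
      then show ?thesis using F1[OF that] by simp
    qed
    define w0 where "w0 = (zt, x0)"
    have w0W: "w0 \<in> ?W" using ctx x0 by (simp add: w0_def)
    define A where "A = {\<xi> \<in> space ?M. S w0 \<xi> \<ge> sL w0}"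
    define B where "B x = {\<xi> \<in> space ?M. S (zt, x) \<xi> > r * sL (zt, x)}" for x
    define T where "T = {\<xi> \<in> space ?M.
              sel (\<lambda>w. \<mu> w + (\<Sum>u\<in>Z \<times> Q. L w u * \<xi> u))
                \<in> Q - saturated Q g \<rho> (c_t \<nu> (card Z) (card Q) t) \<sigma> zt}"
    have Smeas: "S w \<in> borel_measurable ?M" for w
    proof -
      have "S w = (\<lambda>\<xi>. \<Sum>u\<in>?W. L w u * \<xi> u)" by (rule ext) (simp add: S_def)
      then show ?thesis by (simp add: GV_S_meas)
    qed
    have Aset: "A \<in> sets ?M"
    proof -
      have "A = S w0 -` {sL w0..} \<inter> space ?M" by (auto simp: A_def)
      moreover have "S w0 -` {sL w0..} \<inter> space ?M \<in> sets ?M" by (rule measurable_sets[OF Smeas]) simp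
      ultimately show ?thesis by simp
    qed
    have Bset: "B x \<in> sets ?M" for x
    proof -
      have "B x = S (zt, x) -` {r * sL (zt, x)<..} \<inter> space ?M" by (auto simp: B_def)
      moreover have "S (zt, x) -` {r * sL (zt, x)<..} \<inter> space ?M \<in> sets ?M" by (rule measurable_sets[OF Smeas]) simp
      ultimately show ?thesis by simp
    qed
    have Tset: "T \<in> sets ?M"
    proof -
      have "T = (\<lambda>\<xi>. sel (\<lambda>w. \<mu> w + (\<Sum>u\<in>Z \<times> Q. L w u * \<xi> u))) -`
                 (Q - saturated Q g \<rho> (c_t \<nu> (card Z) (card Q) t) \<sigma> zt) \<inter> space ?M"
        by (auto simp: T_def)
      moreover have "(\<lambda>\<xi>. sel (\<lambda>w. \<mu> w + (\<Sum>u\<in>Z \<times> Q. L w u * \<xi> u))) -`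
                 (Q - saturated Q g \<rho> (c_t \<nu> (card Z) (card Q) t) \<sigma> zt) \<inter> space ?M \<in> sets ?M"
        by (rule measurable_sets[OF sel_meas[unfolded std_gauss_vec_def]]) simp
      ultimately show ?thesis by simp
    qed
    have incl: "A - (\<Union>x\<in>Q. B x) \<subseteq> T"
    proof
      fix \<xi> assume xi: "\<xi> \<in> A - (\<Union>x\<in>Q. B x)"
      have xiA: "\<xi> \<in> A" using xi by blast
      have xisp: "\<xi> \<in> space ?M" using xiA by (simp add: A_def)
      define h where "h = (\<lambda>w. \<mu> w + (\<Sum>u\<in>Z \<times> Q. L w u * \<xi> u))"
      have hS: "h w = \<mu> w + S w \<xi>" for w by (simp add: h_def S_def)
      define x where "x = sel h"
      have xQ: "x \<in> Q" using sel by (simp add: x_def)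
      have xmax0: "h (zt, x0) \<le> h (zt, x)"
        using sel x0(1) unfolding x_def by blast
      then have xmax: "h w0 \<le> h (zt, x)" by (simp add: w0_def)
      have xW: "(zt, x) \<in> ?W" using xQ ctx by simp
      have SA: "S w0 \<xi> \<ge> sL w0" using xiA by (simp add: A_def)
      have h0: "h w0 \<ge> \<rho> * g w0"
        using SA F2[OF w0W] unfolding hS abs_le_iff by linarith
      have "\<xi> \<notin> B x" using xi xQ by blast
      then have SB: "S (zt, x) \<xi> \<le> r * sL (zt, x)" using xisp by (simp add: B_def not_less)
      have hx: "h (zt, x) \<le> \<rho> * g (zt, x) + sL (zt, x) + r * sL (zt, x)"
        using SB F2[OF xW] unfolding hS abs_le_iff by linarith
      have notsat: "x \<notin> saturated Q g \<rho> (c_t \<nu> (card Z) (card Q) t) \<sigma> zt"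
      proof
        assume "x \<in> saturated Q g \<rho> (c_t \<nu> (card Z) (card Q) t) \<sigma> zt"
        then have "\<rho> * (g w0 - g (zt, x)) > (1 + r) * sL (zt, x)"
          using ct[OF xW] x0(2)[symmetric] by (simp add: saturated_def w0_def)
        then have "\<rho> * g w0 - \<rho> * g (zt, x) > sL (zt, x) + r * sL (zt, x)"
          by (simp add: algebra_simps)
        then show False using h0 hx xmax by linarith
      qed
      have "sel (\<lambda>w. \<mu> w + (\<Sum>u\<in>Z \<times> Q. L w u * \<xi> u))
                \<in> Q - saturated Q g \<rho> (c_t \<nu> (card Z) (card Q) t) \<sigma> zt"
        using xQ notsat by (simp add: x_def h_def)
      then show "\<xi> \<in> T" using xisp by (simp add: T_def)
    qed
    have PA: "P.prob A \<ge> ?p"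
    proof (cases "sL w0 = 0")
      case True
      then have "\<forall>u\<in>?W. (L w0 u)\<^sup>2 = 0"
        using finW by (simp add: sL_def sum_nonneg_eq_0_iff)
      then have "S w0 \<xi> = 0" for \<xi> unfolding S_def by (intro sum.neutral) auto
      then have "A = space ?M" using True by (auto simp: A_def)
      then show ?thesis using p_le1 by (simp add: P.prob_space)
    next
      case False
      have s0: "0 \<le> (\<Sum>u\<in>?W. (L w0 u)\<^sup>2)" by (intro sum_nonneg) simp
      have "(\<Sum>u\<in>?W. (L w0 u)\<^sup>2) \<noteq> 0" using False by (simp add: sL_def)
      then have pos: "(\<Sum>u\<in>?W. (L w0 u)\<^sup>2) > 0" using s0 by linarith
      have sp: "sL w0 > 0" using pos by (simp add: sL_def)
      have "A = {\<xi> \<in> space ?M. (\<Sum>u\<in>?W. L w0 u * \<xi> u) / sqrt (\<Sum>u\<in>?W. (L w0 u)\<^sup>2) \<in> {1..}}"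
        using sp by (auto simp: A_def S_def sL_def[symmetric] le_divide_eq_1_pos)
      then have "P.prob A = measure (density lborel std_normal_density) {1..}"
        using std_event[OF finW pos, of "{1..}"] by simp
      then show ?thesis using std_meas_lower by simp
    qed
    have PB: "P.prob (B x) \<le> 1 / Nn" for x
    proof (cases "sL (zt, x) = 0")
      case True
      then have "\<forall>u\<in>?W. (L (zt, x) u)\<^sup>2 = 0"
        using finW by (simp add: sL_def sum_nonneg_eq_0_iff)
      then have "S (zt, x) \<xi> = 0" for \<xi> unfolding S_def by (intro sum.neutral) auto
      then have "B x = {}" using True by (auto simp: B_def)
      then show ?thesis using Npos by simp
    next
      case False
      have s0: "0 \<le> (\<Sum>u\<in>?W. (L (zt, x) u)\<^sup>2)" by (intro sum_nonneg) simp
      have "(\<Sum>u\<in>?W. (L (zt, x) u)\<^sup>2) \<noteq> 0" using False by (simp add: sL_def)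
      then have pos: "(\<Sum>u\<in>?W. (L (zt, x) u)\<^sup>2) > 0" using s0 by linarith
      have sp: "sL (zt, x) > 0" using pos by (simp add: sL_def)
      have "B x = {\<xi> \<in> space ?M. (\<Sum>u\<in>?W. L (zt, x) u * \<xi> u) / sqrt (\<Sum>u\<in>?W. (L (zt, x) u)\<^sup>2) \<in> {r<..}}"
        using sp by (auto simp: B_def S_def sL_def[symmetric] pos_less_divide_eq)
      then have "P.prob (B x) = measure (density lborel std_normal_density) {r<..}"
        using std_event[OF finW pos, of "{r<..}"] by simp
      then show ?thesis using std_meas_upper[OF r1] er by simp
    qed
    have PU: "P.prob (\<Union>x\<in>Q. B x) \<le> 1 / (real t)\<^sup>2"
    proof -
      have "P.prob (\<Union>x\<in>Q. B x) \<le> (\<Sum>x\<in>Q. P.prob (B x))"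
        by (rule P.finite_measure_subadditive_finite) (use Q Bset in auto)
      also have "\<dots> \<le> real (card Q) * (1 / Nn)"
        using PB sum_bounded_above[of Q "\<lambda>x. P.prob (B x)" "1 / Nn"] by simp
      also have "\<dots> = 1 / (real (card Z) * (real t)\<^sup>2)"
        using cQ cZ t2 by (simp add: Nn_def field_simps)
      also have "\<dots> \<le> 1 / (real t)\<^sup>2"
      proof (rule divide_left_mono)
        have "(real t)\<^sup>2 > 0" using t2 by simp
        then show "(real t)\<^sup>2 \<le> real (card Z) * (real t)\<^sup>2" using cZ by simp
        show "0 < real (card Z) * (real t)\<^sup>2 * (real t)\<^sup>2" using cZ \<open>(real t)\<^sup>2 > 0\<close> by simp
      qed simp
      finally show ?thesis .
    qed
    have Uset: "(\<Union>x\<in>Q. B x) \<in> sets ?M" by (intro sets.finite_UN) (use Q Bset in auto)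
    have "P.prob A \<le> P.prob ((A - (\<Union>x\<in>Q. B x)) \<union> (\<Union>x\<in>Q. B x))"
      by (rule P.finite_measure_mono) (use Aset Uset in \<open>auto intro: sets.Un sets.Diff\<close>)
    also have "\<dots> \<le> P.prob (A - (\<Union>x\<in>Q. B x)) + P.prob (\<Union>x\<in>Q. B x)"
      by (rule measure_Un_le) (use Aset Uset in \<open>auto intro: sets.Diff\<close>)
    also have "\<dots> \<le> P.prob T + P.prob (\<Union>x\<in>Q. B x)"
      using P.finite_measure_mono[OF incl Tset] by simp
    finally have "P.prob A \<le> P.prob T + P.prob (\<Union>x\<in>Q. B x)" by simp
    then have "P.prob T \<ge> ?p - 1 / (real t)\<^sup>2" using PA PU by linarith
    then show ?thesis by (simp add: T_def std_gauss_vec_def)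
  qed
qed

end
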